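(* In a finite dynamic game as described in the context, suppose $K^i$ is unilaterally sufficient information for player $i$, and let $j\neq i$ be another player. Then for every behavioral strategy profile $g$, every $t$, every $h_t^i\in\mathcal{H}_t^i$ with compression $k_t^i$, and every $h_t^j\in\mathcal{H}_t^j$, $$\Pr^g(h_t^i\mid h_t^j)=\Pr^g(h_t^i\mid k_t^i)\,\Pr^g(k_t^i\mid h_t^j),$$ whenever $\Pr^g(k_t^i)>0$ and $\Pr^g(h_t^j)>0$.
   Context: Game model: finite set of players $\mathcal{I}$, times $\mathcal{T}=\{1,\dots,T\}$. At time $t$ each player $i$ takes action $U_t^i\in\mathcal{U}_t^i$, obtains reward $R_t^i\in[-1,1]$ and learns new information $Z_t^i\in\mathcal{Z}_t^i$. There is a state $X_t\in\mathcal{X}_t$ with $(X_{t+1},Z_t,R_t)=f_t(X_t,U_t,W_t)$ for fixed functions $f_t$. Primitive random variables $(X_1,H_1)$ and $W_1,\dots,W_T$ are mutually independent with commonly known distributions. All sets are finite. Perfect recall: $H_t^i=(H_1^i,Z_{1:t-1}^i)\in\mathcal{H}_t^i$, and $U_t^i$ is a component of $Z_t^i$. Behavioral strategy $g_t^i:\mathcal{H}_t^i\to\Delta(\mathcal{U}_t^i)$. A realization is admissible under $g$ if it has positive probability under $g$. Compression: $K_1^i=\iota_1^i(H_1^i)$, $K_t^i=\iota_t^i(K_{t-1}^i,Z_{t-1}^i)$ for fixed maps, finite value sets $\mathcal{K}_t^i$; $k_t^i$ is the compression of $h_t^i$. Unilaterally sufficient information (USI): $K^i$ is USI for player $i$ if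 there exist $F_t^{i,g^i}:\mathcal{K}_t^i\to\Delta(\mathcal{H}_t^i)$ depending only on $g^i$ and $\Phi_t^{i,g^{-i}}:\mathcal{K}_t^i\to\Delta(\mathcal{X}_t\times\mathcal{H}_t^{-i})$ depending only on $g^{-i}$ with $\Pr^g(x_t,h_t\mid k_t^i)=F_t^{i,g^i}(h_t^i\mid k_t^i)\Phi_t^{i,g^{-i}}(x_t,h_t^{-i}\mid k_t^i)$ for all behavioral profiles $g$, all $t$, all $k_t^i$ admissible under $g$ (with $x_t,h_t^i,h_t^{-i}$ ranging independently; the left side is $0$ if they disagree on shared components). *)

theory Defs
  imports "HOL-Probability.Probability"
begin

(* A history of player i at time t is a pair (h1, zs) with h1 = H_1^i and
   zs = [Z_1^i, ..., Z_{t-1}^i] (perfect recall); so length zs = t - 1.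
   f t x u w = (X_{t+1}, Z_t, R_t).
   P1 is the joint law of (X_1, H_1), PW t the law of W_t; all mutually
   independent (built into the construction of the trajectory law below).
   A behavioural strategy profile g: g t i h is the mixed action of player i
   at time t after history h. *)

type_synonym ('h,'z) hist = "'h \<times> 'z list"

definition behavioral ::
  "(nat \<Rightarrow> 'p \<Rightarrow> 'u set) \<Rightarrow> (nat \<Rightarrow> 'p \<Rightarrow> ('h,'z) hist \<Rightarrow> 'u pmf) \<Rightarrow> bool" where
  "behavioral Uset g \<longleftrightarrow> (\<forall>t i h. set_pmf (g t i h) \<subseteq> Uset t i)"

definition game_model ::
  "nat \<Rightarrow> (nat \<Rightarrow> 'p \<Rightarrow> 'u set)
   \<Rightarrow> (nat \<Rightarrow> 'x \<Rightarrow> ('p \<Rightarrow> 'u) \<Rightarrow> 'w \<Rightarrow> 'x \<times> ('p \<Rightarrow> 'z) \<times> ('p \<Rightarrow> real))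
   \<Rightarrow> (nat \<Rightarrow> 'p \<Rightarrow> 'z \<Rightarrow> 'u) \<Rightarrow> bool" where
  "game_model T Uset f act \<longleftrightarrow>
     (\<forall>t\<in>{1..T}. \<forall>x u w. (\<forall>j. u j \<in> Uset t j) \<longrightarrow>
        (case f t x u w of (x', z, r) \<Rightarrow>
           (\<forall>i. act t i (z i) = u i) \<and> (\<forall>i. \<bar>r i\<bar> \<le> 1)))"

(* one step of the dynamics: from the law of (X_t, H_t) to that of (X_{t+1}, H_{t+1}) *)
definition step ::
  "(nat \<Rightarrow> 'w pmf)
   \<Rightarrow> (nat \<Rightarrow> 'x \<Rightarrow> ('p::finite \<Rightarrow> 'u) \<Rightarrow> 'w \<Rightarrow> 'x \<times> ('p \<Rightarrow> 'z) \<times> ('p \<Rightarrow> real))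
   \<Rightarrow> (nat \<Rightarrow> 'p \<Rightarrow> ('h,'z) hist \<Rightarrow> 'u pmf) \<Rightarrow> nat
   \<Rightarrow> ('x \<times> ('p \<Rightarrow> ('h,'z) hist)) pmf \<Rightarrow> ('x \<times> ('p \<Rightarrow> ('h,'z) hist)) pmf" where
  "step PW f g t D =
     bind_pmf D (\<lambda>(x, h).
     bind_pmf (Pi_pmf UNIV undefined (\<lambda>i. g t i (h i))) (\<lambda>u.
     bind_pmf (PW t) (\<lambda>w.
       (case f t x u w of (x', z, r) \<Rightarrow>
          return_pmf (x', \<lambda>i. (fst (h i), snd (h i) @ [z i]))))))"

(* traj_aux n = law of (X_{n+1}, H_{n+1}) *)
fun traj_aux ::
  "('x \<times> ('p \<Rightarrow> 'h)) pmf \<Rightarrow> (nat \<Rightarrow> 'w pmf)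
   \<Rightarrow> (nat \<Rightarrow> 'x \<Rightarrow> ('p::finite \<Rightarrow> 'u) \<Rightarrow> 'w \<Rightarrow> 'x \<times> ('p \<Rightarrow> 'z) \<times> ('p \<Rightarrow> real))
   \<Rightarrow> (nat \<Rightarrow> 'p \<Rightarrow> ('h,'z) hist \<Rightarrow> 'u pmf) \<Rightarrow> nat
   \<Rightarrow> ('x \<times> ('p \<Rightarrow> ('h,'z) hist)) pmf" where
  "traj_aux P1 PW f g 0 = map_pmf (\<lambda>(x, h1). (x, \<lambda>i. (h1 i, []))) P1"
| "traj_aux P1 PW f g (Suc n) = step PW f g (Suc n) (traj_aux P1 PW f g n)"

(* Pr^g of an event about (X_t, H_t), for t \<ge> 1 *)
definition Pr ::
  "('x \<times> ('p \<Rightarrow> 'h)) pmf \<Rightarrow> (nat \<Rightarrow> 'w pmf)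
   \<Rightarrow> (nat \<Rightarrow> 'x \<Rightarrow> ('p::finite \<Rightarrow> 'u) \<Rightarrow> 'w \<Rightarrow> 'x \<times> ('p \<Rightarrow> 'z) \<times> ('p \<Rightarrow> real))
   \<Rightarrow> (nat \<Rightarrow> 'p \<Rightarrow> ('h,'z) hist \<Rightarrow> 'u pmf) \<Rightarrow> nat
   \<Rightarrow> ('x \<times> ('p \<Rightarrow> ('h,'z) hist)) set \<Rightarrow> real" where
  "Pr P1 PW f g t A = measure_pmf.prob (traj_aux P1 PW f g (t - 1)) A"

definition cPr where
  "cPr P1 PW f g t A B = Pr P1 PW f g t (A \<inter> B) / Pr P1 PW f g t B"

(* compression: K_1 = iota1 i H_1^i, K_{n+2} = iota (n+2) i K_{n+1} Z_{n+1} *)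
fun kcomp_aux :: "('p \<Rightarrow> 'h \<Rightarrow> 'k) \<Rightarrow> (nat \<Rightarrow> 'p \<Rightarrow> 'k \<Rightarrow> 'z \<Rightarrow> 'k)
   \<Rightarrow> 'p \<Rightarrow> 'h \<Rightarrow> 'z list \<Rightarrow> nat \<Rightarrow> 'k" where
  "kcomp_aux \<iota>1 \<iota> i h1 zs 0 = \<iota>1 i h1"
| "kcomp_aux \<iota>1 \<iota> i h1 zs (Suc n) = \<iota> (Suc (Suc n)) i (kcomp_aux \<iota>1 \<iota> i h1 zs n) (zs ! n)"

definition kcomp :: "('p \<Rightarrow> 'h \<Rightarrow> 'k) \<Rightarrow> (nat \<Rightarrow> 'p \<Rightarrow> 'k \<Rightarrow> 'z \<Rightarrow> 'k)
   \<Rightarrow> 'p \<Rightarrow> ('h,'z) hist \<Rightarrow> 'k" where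
  "kcomp \<iota>1 \<iota> i h = kcomp_aux \<iota>1 \<iota> i (fst h) (snd h) (length (snd h))"

(* F receives only g^i,
   Phi receives only g^{-i} (player i's component replaced by undefined).
   h_t^{-i} is represented by a profile of histories whose i-th entry is
   undefined. *)
definition USI ::
  "nat \<Rightarrow> (nat \<Rightarrow> 'p \<Rightarrow> 'u set) \<Rightarrow> ('x \<times> ('p \<Rightarrow> 'h)) pmf \<Rightarrow> (nat \<Rightarrow> 'w pmf)
   \<Rightarrow> (nat \<Rightarrow> 'x \<Rightarrow> ('p::finite \<Rightarrow> 'u) \<Rightarrow> 'w \<Rightarrow> 'x \<times> ('p \<Rightarrow> 'z) \<times> ('p \<Rightarrow> real))
   \<Rightarrow> ('p \<Rightarrow> 'h \<Rightarrow> 'k) \<Rightarrow> (nat \<Rightarrow> 'p \<Rightarrow> 'k \<Rightarrow> 'z \<Rightarrow> 'k) \<Rightarrow> 'p \<Rightarrow> bool" where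
  "USI T Uset P1 PW f \<iota>1 \<iota> i \<longleftrightarrow>
    (\<exists>(F :: (nat \<Rightarrow> ('h,'z) hist \<Rightarrow> 'u pmf) \<Rightarrow> nat \<Rightarrow> 'k \<Rightarrow> ('h,'z) hist pmf)
      (\<Phi> :: (nat \<Rightarrow> 'p \<Rightarrow> ('h,'z) hist \<Rightarrow> 'u pmf) \<Rightarrow> nat \<Rightarrow> 'k
              \<Rightarrow> ('x \<times> ('p \<Rightarrow> ('h,'z) hist)) pmf).
      \<forall>g. behavioral Uset g \<longrightarrow>
      (\<forall>t\<in>{1..T}. \<forall>k.
        Pr P1 PW f g t {\<omega>. kcomp \<iota>1 \<iota> i (snd \<omega> i) = k} > 0 \<longrightarrow>
        (\<forall>x h.
          cPr P1 PW f g t {(x, h)} {\<omega>. kcomp \<iota>1 \<iota> i (snd \<omega> i) = k}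
          = pmf (F (\<lambda>s. g s i) t k) (h i)
            * pmf (\<Phi> (\<lambda>s. (g s)(i := undefined)) t k) (x, h(i := undefined)))))"

end

theory Submission
  imports Defs "HOL-Library.Countable"
begin
no_notation Infinite_Sum.abs_summable_on (infixr \<open>abs'_summable'_on\<close> 46)


lemma prod_indep:
  fixes \<nu> :: "('a::countable \<times> 'b::countable) pmf"
  assumes pq: "\<And>a b. pmf \<nu> (a,b) = p a * q b"
  shows "measure \<nu> (A \<times> B) = measure \<nu> (A \<times> UNIV) * measure \<nu> (UNIV \<times> B)"
proof -
  obtain a0 b0 where ab0: "(a0,b0) \<in> set_pmf \<nu>"
    using set_pmf_not_empty[of \<nu>] by (metis ex_in_conv surj_pair)
  define c where "c = pmf \<nu> (a0,b0)"
  have cpos: "c > 0" using ab0 unfolding c_def by (simp add: pmf_positive)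
  define P where "P a = pmf \<nu> (a,b0)" for a
  define Q where "Q b = pmf \<nu> (a0,b)" for b
  have fac: "pmf \<nu> (a,b) = P a * Q b / c" for a b
    using cpos unfolding P_def Q_def c_def pq by (auto simp: field_simps)
  have sP: "P abs_summable_on X" for X
  proof -
    have "pmf \<nu> abs_summable_on ((\<lambda>a. (a,b0)) ` X)" by (rule pmf_abs_summable)
    then show ?thesis unfolding P_def
      using abs_summable_on_reindex_iff[of "\<lambda>a. (a,b0)" X "pmf \<nu>"] by (simp add: inj_on_def)
  qed
  have sQ: "Q abs_summable_on X" for X
  proof -
    have "pmf \<nu> abs_summable_on ((\<lambda>b. (a0,b)) ` X)" by (rule pmf_abs_summable)
    then show ?thesis unfolding Q_def
      using abs_summable_on_reindex_iff[of "\<lambda>b. (a0,b)" X "pmf \<nu>"] by (simp add: inj_on_def)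
  qed
  have m: "measure \<nu> (X \<times> Y) = infsetsum P X * infsetsum Q Y / c" for X Y
  proof -
    have "measure \<nu> (X \<times> Y) = infsetsum (\<lambda>(a,b). P a * Q b * (1/c)) (X \<times> Y)"
      unfolding measure_pmf_conv_infsetsum by (rule infsetsum_cong) (auto simp: fac)
    also have "\<dots> = infsetsum (\<lambda>(a,b). P a * Q b) (X \<times> Y) * (1/c)"
      by (subst infsetsum_cmult_left[symmetric]) (auto intro: infsetsum_cong abs_summable_on_product sP sQ)
    also have "\<dots> = infsetsum P X * infsetsum Q Y / c"
      by (subst infsetsum_product) (auto intro: sP sQ)
    finally show ?thesis .
  qed
  have one: "measure_pmf.prob \<nu> (UNIV \<times> UNIV) = infsetsum P UNIV * infsetsum Q UNIV / c"
    by (rule m)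
  have one': "infsetsum P UNIV * infsetsum Q UNIV = c"
    using one cpos by (simp add: field_simps)
  have "infsetsum P A * infsetsum Q UNIV / c * (infsetsum P UNIV * infsetsum Q B / c)
     = infsetsum P A * infsetsum Q B * (infsetsum P UNIV * infsetsum Q UNIV) / (c * c)"
    by (simp add: field_simps)
  also have "\<dots> = infsetsum P A * infsetsum Q B / c" using cpos by (simp add: one')
  finally show ?thesis unfolding m by simp
qed

lemma cond_measure:
  assumes "set_pmf p \<inter> s \<noteq> {}"
  shows "measure (cond_pmf p s) X = measure p (X \<inter> s) / measure p s"
proof -
  have "infsetsum (pmf (cond_pmf p s)) X = infsetsum (\<lambda>x. pmf p x * (1 / measure p s)) (X \<inter> s)"
    by (rule infsetsum_cong_neutral) (auto simp: pmf_cond[OF assms])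
  also have "\<dots> = infsetsum (pmf p) (X \<inter> s) * (1 / measure p s)"
    by (rule infsetsum_cmult_left) auto
  finally show ?thesis unfolding measure_pmf_conv_infsetsum by simp
qed

theorem lemma7:
  fixes T :: nat
    and Uset :: "nat \<Rightarrow> 'p::finite \<Rightarrow> 'u::finite set"
    and P1 :: "('x::finite \<times> ('p \<Rightarrow> 'h::finite)) pmf"
    and PW :: "nat \<Rightarrow> 'w::finite pmf"
    and f :: "nat \<Rightarrow> 'x \<Rightarrow> ('p \<Rightarrow> 'u) \<Rightarrow> 'w \<Rightarrow> 'x \<times> ('p \<Rightarrow> 'z::finite) \<times> ('p \<Rightarrow> real)"
    and act :: "nat \<Rightarrow> 'p \<Rightarrow> 'z \<Rightarrow> 'u"
    and \<iota>1 :: "'p \<Rightarrow> 'h \<Rightarrow> 'k::finite"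
    and \<iota> :: "nat \<Rightarrow> 'p \<Rightarrow> 'k \<Rightarrow> 'z \<Rightarrow> 'k"
    and g :: "nat \<Rightarrow> 'p \<Rightarrow> ('h,'z) hist \<Rightarrow> 'u pmf"
    and i j :: 'p and t :: nat
    and hi hj :: "('h,'z) hist"
  assumes game: "game_model T Uset f act"
    and usi: "USI T Uset P1 PW f \<iota>1 \<iota> i"
    and ji: "j \<noteq> i"
    and beh: "behavioral Uset g"
    and tT: "t \<in> {1..T}"
    and hi_len: "length (snd hi) = t - 1"
    and hj_len: "length (snd hj) = t - 1"
    and posk: "Pr P1 PW f g t {\<omega>. kcomp \<iota>1 \<iota> i (snd \<omega> i) = kcomp \<iota>1 \<iota> i hi} > 0"
    and poshj: "Pr P1 PW f g t {\<omega>. snd \<omega> j = hj} > 0"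
  shows "cPr P1 PW f g t {\<omega>. snd \<omega> i = hi} {\<omega>. snd \<omega> j = hj}
       = cPr P1 PW f g t {\<omega>. snd \<omega> i = hi} {\<omega>. kcomp \<iota>1 \<iota> i (snd \<omega> i) = kcomp \<iota>1 \<iota> i hi}
         * cPr P1 PW f g t {\<omega>. kcomp \<iota>1 \<iota> i (snd \<omega> i) = kcomp \<iota>1 \<iota> i hi} {\<omega>. snd \<omega> j = hj}"
proof -
  define \<mu> where "\<mu> = traj_aux P1 PW f g (t - 1)"
  define k where "k = kcomp \<iota>1 \<iota> i hi"
  define K where "K = {\<omega> :: 'x \<times> ('p \<Rightarrow> ('h,'z) hist). kcomp \<iota>1 \<iota> i (snd \<omega> i) = k}"
  define Hi where "Hi = {\<omega> :: 'x \<times> ('p \<Rightarrow> ('h,'z) hist). snd \<omega> i = hi}"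
  define Hj where "Hj = {\<omega> :: 'x \<times> ('p \<Rightarrow> ('h,'z) hist). snd \<omega> j = hj}"
  have PrE: "Pr P1 PW f g t A = measure \<mu> A" for A unfolding Pr_def \<mu>_def by simp
  have mK: "measure \<mu> K > 0" using posk unfolding PrE K_def k_def .
  have mHj: "measure \<mu> Hj > 0" using poshj unfolding PrE Hj_def .
  from usi obtain F \<Phi> where FP: "\<And>g. behavioral Uset g \<Longrightarrow>
      (\<forall>t\<in>{1..T}. \<forall>k.
        Pr P1 PW f g t {\<omega>. kcomp \<iota>1 \<iota> i (snd \<omega> i) = k} > 0 \<longrightarrow>
        (\<forall>x h.
          cPr P1 PW f g t {(x, h)} {\<omega>. kcomp \<iota>1 \<iota> i (snd \<omega> i) = k}
          = pmf (F (\<lambda>s. g s i) t k) (h i)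
            * pmf (\<Phi> (\<lambda>s. (g s)(i := undefined)) t k) (x, h(i := undefined))))"
    unfolding USI_def by blast
  define Fa where "Fa = pmf (F (\<lambda>s. g s i) t k)"
  define Ph where "Ph = pmf (\<Phi> (\<lambda>s. (g s)(i := undefined)) t k)"
  have fac0: "measure \<mu> ({(x,h)} \<inter> K) / measure \<mu> K = Fa (h i) * Ph (x, h(i := undefined))" for x h
    using FP[OF beh, rule_format, OF tT, of k, OF posk[folded k_def]] unfolding Fa_def Ph_def cPr_def PrE K_def by blast
  have ne: "set_pmf \<mu> \<inter> K \<noteq> {}"
    proof
    assume "set_pmf \<mu> \<inter> K = {}"
    then have "measure \<mu> K = 0" by (simp add: measure_pmf_zero_iff)
    with mK show False by simp
  qed
  define \<mu>K where "\<mu>K = cond_pmf \<mu> K"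
  have mcond: "measure \<mu>K X = measure \<mu> (X \<inter> K) / measure \<mu> K" for X
    unfolding \<mu>K_def by (rule cond_measure[OF ne])
  have pK: "pmf \<mu>K (x,h) = Fa (h i) * Ph (x, h(i := undefined))" for x h
    using mcond[of "{(x,h)}"] fac0[of x h] by (simp add: measure_pmf_single)
  define \<pi> where "\<pi> = (\<lambda>(\<omega> :: 'x \<times> ('p \<Rightarrow> ('h,'z) hist)). (snd \<omega> i, (fst \<omega>, (snd \<omega>)(i := undefined))))"
  have inj\<pi>: "inj \<pi>"
  proof (rule injI)
    fix a b assume "\<pi> a = \<pi> b"
    then have "fst a = fst b" "snd a i = snd b i" "(snd a)(i := undefined) = (snd b)(i := undefined)"
      unfolding \<pi>_def by (auto split: prod.splits)
    then have "snd a = snd b" by (metis fun_upd_triv fun_upd_upd)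
    with \<open>fst a = fst b\<close> show "a = b" by (simp add: prod_eq_iff)
  qed
  define \<nu> where "\<nu> = map_pmf \<pi> \<mu>K"
  define q where "q = (\<lambda>(x, h'::'p \<Rightarrow> ('h,'z) hist). if h' i = undefined then Ph (x, h') else 0)"
  have pnu: "pmf \<nu> (a, y) = Fa a * q y" for a y
  proof (cases "snd y i = undefined")
    case True
    obtain x h' where y: "y = (x, h')" by force
    have "\<pi> (x, h'(i := a)) = (a, y)" using True unfolding \<pi>_def y by auto
    then have "pmf \<nu> (a, y) = pmf \<mu>K (x, h'(i := a))"
      unfolding \<nu>_def by (metis pmf_map_inj' inj\<pi>)
    also have "\<dots> = Fa a * q y" unfolding pK q_def y using True y by (simp add: fun_upd_idem)
    finally show ?thesis .
  next
    case False
    then have "\<pi> -` {(a, y)} = {}" unfolding \<pi>_def by auto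
    then have "pmf \<nu> (a, y) = 0" unfolding \<nu>_def pmf_map by simp
    then show ?thesis using False unfolding q_def by (auto split: prod.splits)
  qed
  define B where "B = {y :: 'x \<times> ('p \<Rightarrow> ('h,'z) hist). snd y j = hj}"
  have e1: "Hi \<inter> Hj = \<pi> -` ({hi} \<times> B)" unfolding Hi_def Hj_def B_def \<pi>_def using ji by auto
  have e2: "Hi = \<pi> -` ({hi} \<times> UNIV)" unfolding Hi_def \<pi>_def by auto
  have e3: "Hj = \<pi> -` (UNIV \<times> B)" unfolding Hj_def B_def \<pi>_def using ji by auto
  have ind: "measure \<mu>K (Hi \<inter> Hj) = measure \<mu>K Hi * measure \<mu>K Hj"
    using prod_indep[of \<nu> Fa q "{hi}" B, OF pnu]
    unfolding \<nu>_def measure_map_pmf e1[symmetric] e2[symmetric] e3[symmetric] .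
  have HiK: "Hi \<inter> K = Hi" unfolding Hi_def K_def k_def by auto
  have HiK2: "Hi \<inter> Hj \<inter> K = Hi \<inter> Hj" using HiK by auto
  have eq: "measure \<mu> (Hi \<inter> Hj) * measure \<mu> K = measure \<mu> Hi * measure \<mu> (Hj \<inter> K)"
    using ind mK unfolding mcond HiK HiK2 by (simp add: field_simps power2_eq_square)
  show ?thesis
    unfolding cPr_def PrE
    using eq mK mHj
    unfolding Hi_def[symmetric] Hj_def[symmetric] K_def[symmetric] k_def[symmetric] HiK
    by (simp add: field_simps Int_commute)
qed

end
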